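(* Let $S(A)=(a_n)$ be a regular Stanley sequence with shift index $\sigma=\sigma(A)$ and core $(a'_n)$, and let $\alpha$ be the constant such that $a'_{2^k}=\alpha\cdot 3^k$ for all large $k$ (such $\alpha$ exists since the core is independent). Then there exists a constant $\beta$ such that $a_{2^k-\sigma}=\alpha\cdot 3^k+\beta\cdot 2^k$ for all sufficiently large $k$.
   Context: A set of non-negative integers is 3-free if no three of its elements form an arithmetic progression. For a finite 3-free set $A=\{a_0<\cdots<a_k\}$ of non-negative integers, the Stanley sequence $S(A)=(a_n)_{n\ge0}$ is the increasing sequence with initial terms $a_0,\ldots,a_k$ in which each subsequent $a_{n+1}$ is the smallest integer greater than $a_n$ such that $\{a_0,\ldots,a_{n+1}\}$ is 3-free. Throughout, Stanley sequences are in root position ($a_0=0$). A Stanley sequence $(a_n)$ is independent with character $\lambda$ if for all sufficiently large $k$: $a_{2^k+i}=a_{2^k}+a_i$ for $0\le i<2^k$, and $a_{2^k}=2a_{2^k-1}-\lambda+1$. A Stanley sequence $(a_n)$ is regular if there exist constants $\lambda,\sigma$ and an independent Stanley sequence $(a'_n)$ of character $\lambda$ such that for all large $k$ and $0\le i<2^k$: $a_{2^k-\sigma+i}=a_{2^k-\sigma}+a'_i$ and $a_{2^k-\sigma}=2a_{2^k-\sigma-1}-\lambda+1$; these data are unique, and $\sigma$ is called the shift index and $(a'_n)$ the core. *)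

theory Defs
  imports Complex_Main
begin

definition three_free :: "nat set \<Rightarrow> bool" where
  "three_free S \<longleftrightarrow> (\<forall>x\<in>S. \<forall>y\<in>S. \<forall>z\<in>S. x < y \<and> y < z \<longrightarrow> x + z \<noteq> 2 * y)"

definition stanley_seq_of :: "nat set \<Rightarrow> (nat \<Rightarrow> nat) \<Rightarrow> bool" where
  "stanley_seq_of A a \<longleftrightarrow>
     finite A \<and> three_free A \<and> 0 \<in> A \<and> strict_mono a \<and>
     a ` {0..<card A} = A \<and>
     (\<forall>n. n + 1 \<ge> card A \<longrightarrow>
        a (Suc n) = (LEAST x. x > a n \<and> three_free (a ` {0..n} \<union> {x})))"

definition stanley_seq :: "(nat \<Rightarrow> nat) \<Rightarrow> bool" where
  "stanley_seq a \<longleftrightarrow> (\<exists>A. stanley_seq_of A a)"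

definition independent_char :: "(nat \<Rightarrow> nat) \<Rightarrow> int \<Rightarrow> bool" where
  "independent_char a lam \<longleftrightarrow> stanley_seq a \<and>
     (\<exists>K. \<forall>k\<ge>K. (\<forall>i<2^k. a (2^k + i) = a (2^k) + a i) \<and>
                 int (a (2^k)) = 2 * int (a (2^k - 1)) - lam + 1)"

definition regular_data :: "(nat \<Rightarrow> nat) \<Rightarrow> int \<Rightarrow> int \<Rightarrow> (nat \<Rightarrow> nat) \<Rightarrow> bool" where
  "regular_data a lam \<sigma> a' \<longleftrightarrow> stanley_seq a \<and> independent_char a' lam \<and>
     (\<exists>K. \<forall>k\<ge>K. 2^k - \<sigma> \<ge> 1 \<and>
        (\<forall>i<2^k. a (nat (2^k - \<sigma>) + i) = a (nat (2^k - \<sigma>)) + a' i) \<and>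
        int (a (nat (2^k - \<sigma>))) = 2 * int (a (nat (2^k - \<sigma> - 1))) - lam + 1)"

definition regular_stanley :: "(nat \<Rightarrow> nat) \<Rightarrow> bool" where
  "regular_stanley a \<longleftrightarrow> (\<exists>lam \<sigma> a'. regular_data a lam \<sigma> a')"

end

theory Submission
  imports Defs
begin

theorem mainTheorem8:
  fixes a a' :: "nat \<Rightarrow> nat" and lam \<sigma> :: int and \<alpha> :: real
  assumes "regular_data a lam \<sigma> a'"
    and "\<exists>K. \<forall>k\<ge>K. real (a' (2^k)) = \<alpha> * 3^k"
  shows "\<exists>\<beta>::real. \<exists>K. \<forall>k\<ge>K. real (a (nat (2^k - \<sigma>))) = \<alpha> * 3^k + \<beta> * 2^k"
proof -
  from assms(1) obtain K1 where K1: "\<forall>k\<ge>K1. 2^k - \<sigma> \<ge> 1 \<and>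
        (\<forall>i<2^k. a (nat (2^k - \<sigma>) + i) = a (nat (2^k - \<sigma>)) + a' i) \<and>
        int (a (nat (2^k - \<sigma>))) = 2 * int (a (nat (2^k - \<sigma> - 1))) - lam + 1"
    and ind: "independent_char a' lam"
    unfolding regular_data_def by blast
  from ind obtain K2 where K2: "\<forall>k\<ge>K2. (\<forall>i<2^k. a' (2^k + i) = a' (2^k) + a' i) \<and>
                 int (a' (2^k)) = 2 * int (a' (2^k - 1)) - lam + 1"
    unfolding independent_char_def by blast
  from assms(2) obtain K3 where K3: "\<forall>k\<ge>K3. real (a' (2^k)) = \<alpha> * 3^k" by blast
  define K where "K = max K1 (max K2 K3)"
  define b where "b k = real (a (nat (2^k - \<sigma>)))" for k
  have rec: "b (Suc k) = 2 * b k + \<alpha> * 3^k" if "k \<ge> K" for k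
  proof -
    have k1: "k \<ge> K1" "Suc k \<ge> K1" and k2: "k \<ge> K2" and k3: "k \<ge> K3"
      using that by (auto simp: K_def)
    from K1 k1(1) have ge: "2^k - \<sigma> \<ge> 1"
      and sh: "\<forall>i<2^k. a (nat (2^k - \<sigma>) + i) = a (nat (2^k - \<sigma>)) + a' i" by auto
    have "(1::nat) \<le> 2^k" by simp
    then have "(2::nat)^k - 1 < 2^k" by simp
    with sh have e1: "a (nat (2^k - \<sigma>) + (2^k - 1)) = a (nat (2^k - \<sigma>)) + a' (2^k - 1)" by blast
    have idx: "nat (2^k - \<sigma>) + (2^k - 1) = nat (2^Suc k - \<sigma> - 1)"
    proof -
      have p: "(1::nat) \<le> 2^k" by simp
      have "int (nat (2^k - \<sigma>) + (2^k - 1)) = (2^k - \<sigma>) + (2^k - 1)"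
        using ge p by (simp add: of_nat_diff)
      also have "\<dots> = 2^Suc k - \<sigma> - 1" by simp
      finally show ?thesis using ge by (metis nat_int)
    qed
    from K1 k1(2) have e2: "int (a (nat (2^Suc k - \<sigma>))) = 2 * int (a (nat (2^Suc k - \<sigma> - 1))) - lam + 1"
      by blast
    from K2 k2 have e3: "int (a' (2^k)) = 2 * int (a' (2^k - 1)) - lam + 1" by blast
    from K3 k3 have e4: "real (a' (2^k)) = \<alpha> * 3^k" by blast
    have "int (a (nat (2^Suc k - \<sigma>))) = 2 * int (a (nat (2^k - \<sigma>))) + int (a' (2^k))"
      using e1 e2 e3 idx by simp
    then have "real (a (nat (2^Suc k - \<sigma>))) = 2 * real (a (nat (2^k - \<sigma>))) + real (a' (2^k))"
      by (metis of_int_add of_int_mult of_int_numeral of_int_of_nat_eq)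
    then show ?thesis using e4 by (simp add: b_def)
  qed
  define \<beta> where "\<beta> = (b K - \<alpha> * 3^K) / 2^K"
  have main: "b (K + n) = \<alpha> * 3^(K+n) + \<beta> * 2^(K+n)" for n
  proof (induction n)
    case 0 then show ?case by (simp add: \<beta>_def)
  next
    case (Suc n)
    have "b (K + Suc n) = 2 * b (K + n) + \<alpha> * 3^(K+n)" using rec[of "K+n"] by simp
    also have "\<dots> = \<alpha> * 3^(K + Suc n) + \<beta> * 2^(K + Suc n)" using Suc by (simp add: algebra_simps)
    finally show ?case .
  qed
  show ?thesis
  proof (intro exI allI impI)
    fix k assume "k \<ge> K"
    then obtain n where "k = K + n" using le_Suc_ex by blast
    then show "real (a (nat (2^k - \<sigma>))) = \<alpha> * 3^k + \<beta> * 2^k" using main b_def by simp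
  qed
qed

end
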